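(* Let $B$ be a nilpotent finite-dimensional Leibniz algebra over a field with $\dim B\ge 2$ and $\dim R_1(B)=1$, where $R_1(B)=\{r\in B: Br=0\}$. Then there is no finite-dimensional Leibniz algebra $A$ in which $B$ is an ideal and $B\subseteq\Phi(A)$.
   Context: A (left) Leibniz algebra is an algebra satisfying $x(yz)=(xy)z+y(xz)$ for all $x,y,z$. Nilpotent means $B^t=0$ for some $t$, where $B^1=B$, $B^{j+1}=BB^j$. An ideal is a subspace $I$ with $AI\subseteq I$ and $IA\subseteq I$. $\Phi(A)$, the Frattini subalgebra, is the intersection of all maximal subalgebras of $A$. *)

theory Defs
  imports Complex_Main
begin

text \<open>An algebra over a field: an additive group 'v with a scalar multiplication
  by the field 'k (a vector space) and a bilinear product mult.  The carrier of
  the algebra is the whole type 'v.\<close>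

definition leibniz_algebra ::
  "('k::field \<Rightarrow> 'v::ab_group_add \<Rightarrow> 'v) \<Rightarrow> ('v \<Rightarrow> 'v \<Rightarrow> 'v) \<Rightarrow> bool" where
  "leibniz_algebra scale mult \<longleftrightarrow>
     vector_space scale \<and>
     (\<forall>x y z. mult (x + y) z = mult x z + mult y z) \<and>
     (\<forall>x y z. mult x (y + z) = mult x y + mult x z) \<and>
     (\<forall>c x y. mult (scale c x) y = scale c (mult x y)) \<and>
     (\<forall>c x y. mult x (scale c y) = scale c (mult x y)) \<and>
     (\<forall>x y z. mult x (mult y z) = mult (mult x y) z + mult y (mult x z))"

definition finite_dim :: "('k::field \<Rightarrow> 'v::ab_group_add \<Rightarrow> 'v) \<Rightarrow> bool" where
  "finite_dim scale \<longleftrightarrow> (\<exists>S. finite S \<and> module.span scale S = UNIV)"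

definition subalgebra ::
  "('k::field \<Rightarrow> 'v::ab_group_add \<Rightarrow> 'v) \<Rightarrow> ('v \<Rightarrow> 'v \<Rightarrow> 'v) \<Rightarrow> 'v set \<Rightarrow> bool" where
  "subalgebra scale mult S \<longleftrightarrow>
     module.subspace scale S \<and> (\<forall>x\<in>S. \<forall>y\<in>S. mult x y \<in> S)"

definition ideal ::
  "('k::field \<Rightarrow> 'v::ab_group_add \<Rightarrow> 'v) \<Rightarrow> ('v \<Rightarrow> 'v \<Rightarrow> 'v) \<Rightarrow> 'v set \<Rightarrow> bool" where
  "ideal scale mult I \<longleftrightarrow>
     module.subspace scale I \<and> (\<forall>a x. x \<in> I \<longrightarrow> mult a x \<in> I \<and> mult x a \<in> I)"

definition maximal_subalgebra ::
  "('k::field \<Rightarrow> 'v::ab_group_add \<Rightarrow> 'v) \<Rightarrow> ('v \<Rightarrow> 'v \<Rightarrow> 'v) \<Rightarrow> 'v set \<Rightarrow> bool" where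
  "maximal_subalgebra scale mult M \<longleftrightarrow>
     subalgebra scale mult M \<and> M \<noteq> UNIV \<and>
     (\<forall>S. subalgebra scale mult S \<and> M \<subseteq> S \<longrightarrow> S = M \<or> S = UNIV)"

text \<open>Frattini subalgebra: intersection of all maximal subalgebras
  (the whole algebra if there are none).\<close>
definition frattini ::
  "('k::field \<Rightarrow> 'v::ab_group_add \<Rightarrow> 'v) \<Rightarrow> ('v \<Rightarrow> 'v \<Rightarrow> 'v) \<Rightarrow> 'v set" where
  "frattini scale mult = \<Inter> {M. maximal_subalgebra scale mult M}"

fun alg_power ::
  "('k::field \<Rightarrow> 'v::ab_group_add \<Rightarrow> 'v) \<Rightarrow> ('v \<Rightarrow> 'v \<Rightarrow> 'v) \<Rightarrow> 'v set \<Rightarrow> nat \<Rightarrow> 'v set" where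
  "alg_power scale mult B 0 = B"
| "alg_power scale mult B (Suc 0) = B"
| "alg_power scale mult B (Suc (Suc j)) =
     module.span scale {mult b x | b x. b \<in> B \<and> x \<in> alg_power scale mult B (Suc j)}"

definition nilpotent_sub ::
  "('k::field \<Rightarrow> 'v::ab_group_add \<Rightarrow> 'v) \<Rightarrow> ('v \<Rightarrow> 'v \<Rightarrow> 'v) \<Rightarrow> 'v set \<Rightarrow> bool" where
  "nilpotent_sub scale mult B \<longleftrightarrow> (\<exists>t\<ge>1. alg_power scale mult B t = {0})"

definition R1 :: "('v \<Rightarrow> 'v \<Rightarrow> 'v) \<Rightarrow> 'v::zero set \<Rightarrow> 'v set" where
  "R1 mult B = {r \<in> B. \<forall>b\<in>B. mult b r = 0}"

end

theory Submission imports Defs begin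

locale leib = vector_space scale for scale :: "'k::field \<Rightarrow> 'v::ab_group_add \<Rightarrow> 'v" +
  fixes mult :: "'v \<Rightarrow> 'v \<Rightarrow> 'v"
  assumes ladd: "mult (x + y) z = mult x z + mult y z"
    and radd: "mult x (y + z) = mult x y + mult x z"
    and lsc: "mult (scale c x) y = scale c (mult x y)"
    and rsc: "mult x (scale c y) = scale c (mult x y)"
    and leibniz: "mult x (mult y z) = mult (mult x y) z + mult y (mult x z)"
begin

lemma lzero[simp]: "mult 0 y = 0"
  using ladd[of 0 0 y] by simp
lemma rzero[simp]: "mult x 0 = 0"
  using radd[of x 0 0] by simp
lemma lneg: "mult (- x) y = - mult x y"
  using ladd[of x "-x" y] by (simp add: eq_neg_iff_add_eq_0 add.commute)
lemma rneg: "mult x (- y) = - mult x y"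
  using radd[of x y "-y"] by (simp add: eq_neg_iff_add_eq_0 add.commute)
lemma ldiff: "mult (x - y) z = mult x z - mult y z"
  using ladd[of x "-y" z] lneg by simp
lemma rdiff: "mult x (y - z) = mult x y - mult x z"
  using radd[of x y "-z"] rneg by simp
lemma lsum: "mult (sum f S) y = (\<Sum>i\<in>S. mult (f i) y)"
  by (induction S rule: infinite_finite_induct) (auto simp: ladd)
lemma rsum: "mult y (sum f S) = (\<Sum>i\<in>S. mult y (f i))"
  by (induction S rule: infinite_finite_induct) (auto simp: radd)

lemma dual_aux:
  assumes B: "subspace B" and z: "z \<noteq> 0"
    and R: "\<And>v. v \<in> B \<Longrightarrow> (\<forall>b\<in>B. mult b v = 0) \<Longrightarrow> v \<in> span {z}"
  shows "finite S \<Longrightarrow> S \<subseteq> B \<Longrightarrow> (\<forall>s\<in>S. \<forall>b\<in>B. mult b s \<in> span{z}) \<Longrightarrow>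
     independent (insert z S) \<Longrightarrow> z \<notin> S \<Longrightarrow> (\<forall>s\<in>S. h s \<in> span {z}) \<Longrightarrow>
     \<exists>b\<in>B. \<forall>s\<in>S. mult b s = h s"
proof (induction S arbitrary: h rule: finite_induct)
  case empty
  then show ?case using subspace_0[OF B] by blast
next
  case (insert x S)
  have SB: "S \<subseteq> B" and xB: "x \<in> B" using insert.prems by auto
  have indS: "independent (insert z S)"
    using insert.prems(3) by (rule independent_mono) auto
  have IH: "\<And>h. (\<forall>s\<in>S. h s \<in> span{z}) \<Longrightarrow> \<exists>b\<in>B. \<forall>s\<in>S. mult b s = h s"
    using insert.IH SB indS insert.prems by blast
  define co where "co v = (SOME c. v = scale c z)" for v
  have co: "v = scale (co v) z" if "v \<in> span {z}" for v
  proof -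
    from that obtain c where "v = scale c z" by (auto simp: span_singleton)
    then show ?thesis unfolding co_def by (rule someI)
  qed
  have claim: "\<exists>b0\<in>B. (\<forall>s\<in>S. mult b0 s = 0) \<and> mult b0 x \<noteq> 0"
  proof (rule ccontr)
    assume "\<not> ?thesis"
    hence nb: "\<And>b0. b0\<in>B \<Longrightarrow> \<forall>s\<in>S. mult b0 s = 0 \<Longrightarrow> mult b0 x = 0" by blast
    have "\<forall>s\<in>S. \<exists>\<beta>\<in>B. \<forall>t\<in>S. mult \<beta> t = (if t = s then z else 0)"
    proof
      fix s assume "s \<in> S"
      have "\<forall>t\<in>S. (if t = s then z else 0) \<in> span {z}" by (auto intro: span_base span_zero)
      from IH[OF this] show "\<exists>\<beta>\<in>B. \<forall>t\<in>S. mult \<beta> t = (if t = s then z else 0)" .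
    qed
    then obtain \<beta> where \<beta>B: "\<And>s. s\<in>S \<Longrightarrow> \<beta> s \<in> B"
      and \<beta>: "\<And>s t. s\<in>S \<Longrightarrow> t \<in> S \<Longrightarrow> mult (\<beta> s) t = (if t = s then z else 0)"
      by metis
    define x' where "x' = x - (\<Sum>s\<in>S. scale (co (mult (\<beta> s) x)) s)"
    have x'B: "x' \<in> B" unfolding x'_def
      using SB xB by (intro subspace_diff[OF B] subspace_sum[OF B] subspace_scale[OF B]) auto
    have "\<forall>b\<in>B. mult b x' = 0"
    proof
      fix b assume bB: "b \<in> B"
      define b' where "b' = b - (\<Sum>s\<in>S. scale (co (mult b s)) (\<beta> s))"
      have b'B: "b' \<in> B" unfolding b'_def
        using \<beta>B bB by (intro subspace_diff[OF B] subspace_sum[OF B] subspace_scale[OF B]) auto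
      have "\<forall>t\<in>S. mult b' t = 0"
      proof
        fix t assume tS: "t \<in> S"
        have "mult b' t = mult b t - (\<Sum>s\<in>S. scale (co (mult b s)) (mult (\<beta> s) t))"
          unfolding b'_def by (simp add: ldiff lsum lsc)
        also have "(\<Sum>s\<in>S. scale (co (mult b s)) (mult (\<beta> s) t)) =
             (\<Sum>s\<in>S. if t = s then scale (co (mult b s)) z else 0)"
          using \<beta> tS by (intro sum.cong) auto
        also have "\<dots> = scale (co (mult b t)) z" using tS insert.hyps(1) by simp
        also have "\<dots> = mult b t" using co[of "mult b t"] insert.prems(2) tS bB by auto
        finally show "mult b' t = 0" by simp
      qed
      hence "mult b' x = 0" using nb b'B by blast
      hence bx: "mult b x = (\<Sum>s\<in>S. scale (co (mult b s)) (mult (\<beta> s) x))"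
        unfolding b'_def by (simp add: ldiff lsum lsc)
      have "mult b x' = mult b x - (\<Sum>s\<in>S. scale (co (mult (\<beta> s) x)) (mult b s))"
        unfolding x'_def by (simp add: rdiff rsum rsc)
      also have "(\<Sum>s\<in>S. scale (co (mult (\<beta> s) x)) (mult b s)) =
          (\<Sum>s\<in>S. scale (co (mult b s)) (mult (\<beta> s) x))"
      proof (intro sum.cong refl)
        fix s assume sS: "s \<in> S"
        have e1: "mult b s = scale (co (mult b s)) z" using co insert.prems(2) sS bB by auto
        have e2: "mult (\<beta> s) x = scale (co (mult (\<beta> s) x)) z"
          using co insert.prems(2) sS \<beta>B by auto
        show "scale (co (mult (\<beta> s) x)) (mult b s) = scale (co (mult b s)) (mult (\<beta> s) x)"
          by (subst e1, subst e2) (simp add: mult.commute)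
      qed
      finally show "mult b x' = 0" using bx by simp
    qed
    hence "x' \<in> span {z}" using R x'B by blast
    hence "x' \<in> span (insert z S)" by (rule set_mp[OF span_mono, rotated]) auto
    moreover have "(\<Sum>s\<in>S. scale (co (mult (\<beta> s) x)) s) \<in> span (insert z S)"
      by (intro span_sum span_scale span_base) auto
    ultimately have "x \<in> span (insert z S)" unfolding x'_def
      by (metis diff_add_cancel span_add)
    moreover have "x \<notin> insert z S" using insert.hyps(2) insert.prems(4) by auto
    ultimately show False using insert.prems(3)
      by (metis independent_insert insert_commute)
  qed
  then obtain b0 where b0B: "b0 \<in> B" and b0S: "\<forall>s\<in>S. mult b0 s = 0" and b0x: "mult b0 x \<noteq> 0"
    by blast
  obtain b1 where b1B: "b1 \<in> B" and b1: "\<forall>s\<in>S. mult b1 s = h s"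
    using IH[of h] insert.prems(5) by auto
  have e0: "mult b0 x = scale (co (mult b0 x)) z" using co insert.prems(2) b0B by auto
  have e1: "mult b1 x = scale (co (mult b1 x)) z" using co insert.prems(2) b1B by auto
  have eh: "h x = scale (co (h x)) z" using co insert.prems(5) by auto
  have c0: "co (mult b0 x) \<noteq> 0" using e0 b0x by auto
  define c where "c = (co (h x) - co (mult b1 x)) / co (mult b0 x)"
  define b where "b = b1 + scale c b0"
  have "b \<in> B" unfolding b_def using b1B b0B B by (simp add: subspace_add subspace_scale)
  moreover have "\<forall>s\<in>S. mult b s = h s" using b1 b0S by (simp add: b_def ladd lsc)
  moreover have "mult b x = h x"
  proof -
    have "mult b x = scale (co (mult b1 x)) z + scale c (scale (co (mult b0 x)) z)"
      unfolding b_def by (simp add: ladd lsc flip: e0 e1)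
    also have "\<dots> = scale (co (mult b1 x) + c * co (mult b0 x)) z"
      by (simp add: scale_left_distrib)
    also have "co (mult b1 x) + c * co (mult b0 x) = co (h x)"
      using c0 by (simp add: c_def)
    finally show ?thesis using eh by simp
  qed
  ultimately show ?case by auto
qed


lemma pow_sub:
  assumes "subspace B" "\<forall>x\<in>B. \<forall>y\<in>B. mult x y \<in> B"
  shows "alg_power scale mult B n \<subseteq> B"
proof (induction n rule: nat_less_induct)
  case (1 n)
  show ?case
  proof (cases n)
    case (Suc m)
    show ?thesis
    proof (cases m)
      case (Suc j)
      have "alg_power scale mult B (Suc j) \<subseteq> B" using 1 Suc \<open>n = Suc m\<close> by auto
      hence "{mult b x |b x. b \<in> B \<and> x \<in> alg_power scale mult B (Suc j)} \<subseteq> B"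
        using assms(2) by blast
      hence "span {mult b x |b x. b \<in> B \<and> x \<in> alg_power scale mult B (Suc j)} \<subseteq> B"
        using span_minimal assms(1) by blast
      thus ?thesis using \<open>n = Suc m\<close> Suc by simp
    qed (use Suc in auto)
  qed auto
qed

end

theorem mainTheorem16:
  fixes scale :: "'k::field \<Rightarrow> 'v::ab_group_add \<Rightarrow> 'v"
    and mult :: "'v \<Rightarrow> 'v \<Rightarrow> 'v"
    and B :: "'v set"
  assumes "leibniz_algebra scale mult"
    and "finite_dim scale"
    and "ideal scale mult B"
    and "nilpotent_sub scale mult B"
    and "vector_space.dim scale B \<ge> 2"
    and "vector_space.dim scale (R1 mult B) = 1"
  shows "\<not> B \<subseteq> frattini scale mult"
proof
  assume BF: "B \<subseteq> frattini scale mult"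
  interpret leib scale mult
    using assms(1) unfolding leibniz_algebra_def leib_def leib_axioms_def by blast
  obtain Fs where "finite Fs" "span Fs = UNIV" using assms(2) unfolding finite_dim_def by blast
  obtain Bs where Bs: "independent Bs" "UNIV \<subseteq> span Bs"
    using maximal_independent_subset[of UNIV] by blast
  have "finite Bs" using independent_span_bound[OF \<open>finite Fs\<close> Bs(1)] \<open>span Fs = UNIV\<close> by auto
  interpret F: finite_dimensional_vector_space scale Bs
    by unfold_locales (use Bs \<open>finite Bs\<close> in auto)
  have Bsub: "subspace B" and Bid: "\<And>a x. x \<in> B \<Longrightarrow> mult a x \<in> B \<and> mult x a \<in> B"
    using assms(3) unfolding ideal_def by auto
  define Z where "Z = R1 mult B"
  have ZB: "Z \<subseteq> B" unfolding Z_def R1_def by auto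
  have Zsub: "subspace Z"
    unfolding Z_def R1_def using Bsub
    by (auto simp: subspace_def rsc radd)
  obtain Zb where Zb: "Zb \<subseteq> Z" "independent Zb" "Z \<subseteq> span Zb"
    using maximal_independent_subset[of Z] by blast
  have "card Zb = 1" using basis_card_eq_dim[OF Zb(1,3,2)] assms(6) Z_def by simp
  then obtain z where zb: "Zb = {z}" by (rule card_1_singletonE)
  have z0: "z \<noteq> 0" using Zb(2) zb by simp
  have Zspan: "Z = span {z}"
  proof
    show "Z \<subseteq> span {z}" using Zb zb by auto
    have "{z} \<subseteq> Z" using Zb zb by auto
    thus "span {z} \<subseteq> Z" using span_minimal[OF _ Zsub] by blast
  qed
  have R: "\<And>v. v \<in> B \<Longrightarrow> (\<forall>b\<in>B. mult b v = 0) \<Longrightarrow> v \<in> span {z}"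
    using Zspan unfolding Z_def R1_def by auto
  have zB: "z \<in> B" using Zspan ZB span_base by blast
  have zZ: "z \<in> Z" using Zspan span_base by blast
  have zann: "\<And>b. b \<in> B \<Longrightarrow> mult b z = 0" using zZ unfolding Z_def R1_def by auto
  have BnZ: "\<not> B \<subseteq> span {z}"
  proof
    assume "B \<subseteq> span {z}"
    hence "B = Z" using Zspan ZB by auto
    thus False using assms(5,6) Z_def by simp
  qed
  have Bcl: "\<forall>x\<in>B. \<forall>y\<in>B. mult x y \<in> B" using Bid by blast
  have pw: "\<And>n. alg_power scale mult B n \<subseteq> B" using pow_sub[OF Bsub Bcl] .
  obtain t where t: "t \<ge> 1" "alg_power scale mult B t = {0}"
    using assms(4) unfolding nilpotent_sub_def by blast
  define P where "P k = (1 \<le> k \<and> alg_power scale mult B k \<subseteq> span {z})" for k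
  have "P t" using t span_zero unfolding P_def by auto
  define k where "k = (LEAST k. P k)"
  have Pk: "P k" unfolding k_def using \<open>P t\<close> by (rule LeastI)
  have "k \<noteq> 1" using Pk BnZ unfolding P_def by auto
  with Pk have "k \<ge> 2" unfolding P_def by auto
  then obtain j where kj: "k = Suc (Suc j)"
    using Suc_diff_le[of 2 k] by (intro that[of "k - 2"]) simp
  have "\<not> P (Suc j)" using kj not_less_Least[of "Suc j" P] unfolding k_def by auto
  then obtain w where wP: "w \<in> alg_power scale mult B (Suc j)" and wz: "w \<notin> span {z}"
    unfolding P_def by auto
  have wB: "w \<in> B" using wP pw by auto
  have wW: "\<forall>b\<in>B. mult b w \<in> span {z}"
  proof
    fix b assume "b \<in> B"
    hence "mult b w \<in> alg_power scale mult B (Suc (Suc j))"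
      using wP by (auto intro: span_base)
    thus "mult b w \<in> span {z}" using Pk kj unfolding P_def by auto
  qed
  define W where "W = {v \<in> B. \<forall>b\<in>B. mult b v \<in> span {z}}"
  have Wsub: "subspace W" unfolding W_def using Bsub
    by (auto simp: subspace_def radd rsc span_add span_scale span_zero)
  have zW: "z \<in> W" unfolding W_def using zB zann by (auto intro: span_zero)
  have AZ: "mult a z \<in> span {z}" for a
  proof -
    have "\<forall>b\<in>B. mult b (mult a z) = 0"
    proof
      fix b assume bB: "b \<in> B"
      have "mult b z = 0" using zann bB by auto
      moreover have "mult (mult b a) z = 0"
        using Bid[OF bB] zann by auto
      ultimately show "mult b (mult a z) = 0" unfolding leibniz[of b a z] by simp
    qed
    thus ?thesis using R Bid[OF zB] by blast
  qed
  have AW: "mult a v \<in> W" if vW: "v \<in> W" for a v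
  proof -
    have vB: "v \<in> B" using that W_def by auto
    have "\<forall>b\<in>B. mult b (mult a v) \<in> span {z}"
    proof
      fix b assume bB: "b \<in> B"
      have "mult (mult b a) v \<in> span {z}" using that Bid[OF bB] unfolding W_def by auto
      moreover obtain c where "mult b v = scale c z"
        using vW bB unfolding W_def by (auto simp: span_singleton)
      hence "mult a (mult b v) \<in> span {z}" using AZ[of a] by (simp add: rsc span_scale)
      ultimately show "mult b (mult a v) \<in> span {z}" unfolding leibniz[of b a v] by (rule span_add)
    qed
    thus ?thesis using Bid[OF vB] unfolding W_def by auto
  qed
  obtain S0 where S0: "{z} \<subseteq> S0" "S0 \<subseteq> W" "independent S0" "W \<subseteq> span S0"
    using maximal_independent_subset_extend[of "{z}" W] zW z0 by auto
  define S where "S = S0 - {z}"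
  have S0S: "S0 = insert z S" and zS: "z \<notin> S" using S0(1) unfolding S_def by auto
  have finS: "finite S" using F.finiteI_independent[OF S0(3)] S_def by auto
  have SW: "S \<subseteq> W" using S0 S_def by auto
  have SB: "S \<subseteq> B" using SW W_def by auto
  have indS: "independent (insert z S)" using S0 S0S by simp
  have zspanS: "z \<notin> span S" using indS zS by (simp add: independent_insert)
  have UZ: "u \<in> span S \<Longrightarrow> u \<in> span {z} \<Longrightarrow> u = 0" for u
  proof -
    assume u: "u \<in> span S" "u \<in> span {z}"
    then obtain c where uc: "u = scale c z" by (auto simp: span_singleton)
    show "u = 0"
    proof (rule ccontr)
      assume "u \<noteq> 0"
      hence "c \<noteq> 0" using uc by auto
      hence "z = scale (inverse c) u" using uc by simp
      hence "z \<in> span S" using u span_scale by metis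
      thus False using zspanS by simp
    qed
  qed
  obtain s where sS: "s \<in> S"
  proof (cases "S = {}")
    case True
    hence "W \<subseteq> span {z}" using S0 S0S by auto
    moreover have "w \<in> W" using wB wW W_def by auto
    ultimately show ?thesis using wz by auto
  qed auto
  define K where "K = {a. \<forall>u\<in>span S. mult a u \<in> span S}"
  have Ksub: "subalgebra scale mult K"
  proof -
    have "subspace K" unfolding K_def by (auto simp: subspace_def ladd lsc span_add span_scale span_zero)
    moreover have "mult a a' \<in> K" if aK: "a \<in> K" and aK': "a' \<in> K" for a a'
    proof -
      have "mult (mult a a') u \<in> span S" if uS: "u \<in> span S" for u
      proof -
        have e: "mult (mult a a') u = mult a (mult a' u) - mult a' (mult a u)"
          using leibniz[of a a' u] by (simp add: eq_diff_eq)
        have "mult a (mult a' u) \<in> span S" using aK aK' uS unfolding K_def by blast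
        moreover have "mult a' (mult a u) \<in> span S" using aK aK' uS unfolding K_def by blast
        ultimately show ?thesis unfolding e by (rule span_diff)
      qed
      thus ?thesis unfolding K_def by blast
    qed
    ultimately show ?thesis unfolding subalgebra_def by blast
  qed
  have KnU: "K \<noteq> UNIV"
  proof
    assume KU: "K = UNIV"
    have s0: "s \<notin> span {z}" 
    proof
      assume "s \<in> span {z}"
      hence "s = 0" using UZ sS span_base by blast
      thus False using indS sS dependent_zero[of "insert z S"] by auto
    qed
    then obtain b where bB: "b \<in> B" and bs: "mult b s \<noteq> 0" using R sS SB by blast
    have "mult b s \<in> span {z}" using sS SW bB W_def by auto
    moreover have "mult b s \<in> span S" using KU sS unfolding K_def by (auto intro: span_base)
    ultimately show False using UZ bs by blast
  qed
  have supp: "\<exists>b\<in>B. a - b \<in> K" for a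
  proof -
    have "\<forall>s\<in>S. \<exists>c. mult a s - scale c z \<in> span S"
    proof
      fix s assume "s \<in> S"
      hence "mult a s \<in> span (insert z S)" using AW SW S0 S0S by auto
      thus "\<exists>c. mult a s - scale c z \<in> span S" by (simp add: span_breakdown_eq)
    qed
    then obtain c where c: "\<And>s. s \<in> S \<Longrightarrow> mult a s - scale (c s) z \<in> span S" by metis
    have "\<forall>s\<in>S. scale (c s) z \<in> span {z}" by (auto intro: span_scale span_base)
    moreover have SWz: "\<forall>s\<in>S. \<forall>b\<in>B. mult b s \<in> span {z}" using SW unfolding W_def by blast
    ultimately have "\<exists>b\<in>B. \<forall>s\<in>S. mult b s = scale (c s) z"
      using dual_aux[OF Bsub z0 R finS SB _ indS zS, of "\<lambda>s. scale (c s) z"] by blast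
    then obtain b where bB: "b \<in> B" and bs: "\<forall>s\<in>S. mult b s = scale (c s) z" by blast
    have "mult (a - b) u \<in> span S" if "u \<in> span S" for u
      using that
    proof (induction rule: span_induct)
      case base
      show ?case by (auto simp: subspace_def radd rsc span_add span_scale span_zero)
    next
      case (step x)
      thus ?case using c bs by (simp add: ldiff)
    qed
    thus ?thesis using bB K_def by auto
  qed
  define D where "D = {vector_space.dim scale T | T. subalgebra scale mult T \<and> K \<subseteq> T \<and> T \<noteq> UNIV}"
  have Dfin: "finite D"
  proof (rule finite_subset)
    show "D \<subseteq> {..F.dimension}" unfolding D_def using F.dim_subset_UNIV by auto
  qed auto
  have "dim K \<in> D" using Ksub KnU D_def by auto
  hence "Max D \<in> D" using Dfin by (intro Max_in) auto
  moreover have Dmem: "\<And>x. x \<in> D \<Longrightarrow> \<exists>T. x = dim T \<and> subalgebra scale mult T \<and> K \<subseteq> T \<and> T \<noteq> UNIV"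
    unfolding D_def by blast
  ultimately obtain M where M: "subalgebra scale mult M" "K \<subseteq> M" "M \<noteq> UNIV" "dim M = Max D"
    by metis
  have Mmax: "maximal_subalgebra scale mult M"
    unfolding maximal_subalgebra_def
  proof (intro conjI allI impI M(1,3))
    fix T assume T: "subalgebra scale mult T \<and> M \<subseteq> T"
    show "T = M \<or> T = UNIV"
    proof (rule ccontr)
      assume "\<not> ?thesis"
      hence TM: "T \<noteq> M" and TU: "T \<noteq> UNIV" by auto
      have "K \<subseteq> T" using T M(2) by blast
      hence "dim T \<in> D" unfolding D_def using T TU by blast
      hence "dim T \<le> dim M" using M(4) Dfin by auto
      moreover have "span M \<subset> span T"
      proof -
        have "subspace M" "subspace T" using T M(1) unfolding subalgebra_def by auto
        hence e: "span M = M" "span T = T" using span_eq_iff by blast+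
        have "M \<subset> T" using T TM by blast
        thus ?thesis unfolding e .
      qed
      hence "dim M < dim T" by (rule F.dim_psubset)
      ultimately show False by simp
    qed
  qed
  hence "B \<subseteq> M" using BF unfolding frattini_def by auto
  have "M = UNIV"
  proof (intro set_eqI iffI)
    fix a
    obtain b where "b \<in> B" "a - b \<in> K" using supp by blast
    hence m1: "a - b \<in> M" and m2: "b \<in> M" using \<open>B \<subseteq> M\<close> M(2) by auto
    have "subspace M" using M(1) unfolding subalgebra_def by auto
    hence "(a - b) + b \<in> M" using m1 m2 by (rule subspace_add)
    thus "a \<in> M" by simp
  qed auto
  thus False using M(3) by simp
qed

end
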